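(* Let $k\ge 2$ and let $U_k$ be the binary matrix whose columns are indexed by the integers $1,\dots,2^k-1$ and whose rows are indexed by those integers $r\in\{1,\dots,2^k-1\}$ that are not powers of $2$ (so $U_k$ has $2^k-1-k$ rows), where the row indexed by $r$, with $2^t<r<2^{t+1}$ for the integer $t$, has its $1$-entries exactly in the columns indexed by $r$, $r-2^t$ and $2^t$. Then $u(U_k)=\varepsilon(U_k)=2^{k-1}$.
   Context: All matrices are binary. For a nonempty set $S$ of columns of a binary matrix, let $z$ be the sum over the integers of the columns in $S$. $S$ is called $1$-free if no entry of $z$ equals $1$, and even if all entries of $z$ are even. For a binary $m\times n$ matrix $A$ with $m<n$: $\varepsilon(A)$ is the smallest cardinality of a nonempty even set of columns of $A$, and $u(A)$ is the smallest cardinality of a nonempty $1$-free set of columns of $A$. *)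

theory Defs
  imports Main
begin

text \<open>A binary matrix is given by a finite set of row indices R, a finite set of
column indices C and an entry predicate A (A r c means entry (r,c) is 1).\<close>

definition col_sum :: "('r \<Rightarrow> 'c \<Rightarrow> bool) \<Rightarrow> 'c set \<Rightarrow> 'r \<Rightarrow> nat" where
  "col_sum A S r = card {c \<in> S. A r c}"

definition one_free_set :: "'r set \<Rightarrow> 'c set \<Rightarrow> ('r \<Rightarrow> 'c \<Rightarrow> bool) \<Rightarrow> 'c set \<Rightarrow> bool" where
  "one_free_set R C A S \<longleftrightarrow> S \<subseteq> C \<and> S \<noteq> {} \<and> (\<forall>r\<in>R. col_sum A S r \<noteq> 1)"

definition even_set :: "'r set \<Rightarrow> 'c set \<Rightarrow> ('r \<Rightarrow> 'c \<Rightarrow> bool) \<Rightarrow> 'c set \<Rightarrow> bool" where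
  "even_set R C A S \<longleftrightarrow> S \<subseteq> C \<and> S \<noteq> {} \<and> (\<forall>r\<in>R. even (col_sum A S r))"

definition eps_mat :: "'r set \<Rightarrow> 'c set \<Rightarrow> ('r \<Rightarrow> 'c \<Rightarrow> bool) \<Rightarrow> nat" where
  "eps_mat R C A = (LEAST n. \<exists>S. even_set R C A S \<and> card S = n)"

definition u_mat :: "'r set \<Rightarrow> 'c set \<Rightarrow> ('r \<Rightarrow> 'c \<Rightarrow> bool) \<Rightarrow> nat" where
  "u_mat R C A = (LEAST n. \<exists>S. one_free_set R C A S \<and> card S = n)"

definition U_cols :: "nat \<Rightarrow> nat set" where
  "U_cols k = {1..2^k - 1}"

definition U_rows :: "nat \<Rightarrow> nat set" where
  "U_rows k = {r \<in> {1..2^k - 1}. \<not> (\<exists>t. r = 2^t)}"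

definition U_entry :: "nat \<Rightarrow> nat \<Rightarrow> bool" where
  "U_entry r c \<longleftrightarrow> (\<exists>t::nat. 2^t < r \<and> r < 2^(t+1) \<and> (c = r \<or> c = r - 2^t \<or> c = 2^t))"

end

theory Submission
  imports Defs
begin

lemma t_unique:
  fixes t t' r :: nat
  assumes "2^t < r" "r < 2^(t+1)" "2^t' < r" "r < 2^(t'+1)"
  shows "t = t'"
proof (rule ccontr)
  assume "t \<noteq> t'"
  then have "t < t' \<or> t' < t" by arith
  then show False
  proof
    assume "t < t'" then have "(2::nat)^(t+1) \<le> 2^t'" by (intro power_increasing) auto
    with assms show False by linarith
  next
    assume "t' < t" then have "(2::nat)^(t'+1) \<le> 2^t" by (intro power_increasing) auto
    with assms show False by linarith
  qed
qed

lemma entry_iff: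
  assumes "2^t < r" "r < 2^(t+1)"
  shows "U_entry r c \<longleftrightarrow> (c = r \<or> c = r - 2^t \<or> c = 2^t)"
proof
  assume "U_entry r c"
  then obtain t' where t': "2^t' < r" "r < 2^(t'+1)" "c = r \<or> c = r - 2^t' \<or> c = 2^t'"
    unfolding U_entry_def by blast
  have "t' = t" using t_unique[OF t'(1,2) assms] .
  then show "c = r \<or> c = r - 2^t \<or> c = 2^t" using t'(3) by simp
next
  assume "c = r \<or> c = r - 2^t \<or> c = 2^t"
  then show "U_entry r c" unfolding U_entry_def using assms by blast
qed

lemma entry_le: "U_entry r c \<Longrightarrow> c \<le> r"
  unfolding U_entry_def by auto

lemma row_sum:
  fixes m s :: nat
  assumes "1 \<le> s" "s < 2^m"
  shows "col_sum U_entry S (2^m + s) = card (S \<inter> {2^m + s, s, 2^m})"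
proof -
  have "2^m < 2^m + s" "2^m + s < (2::nat)^(m+1)" using assms by auto
  then have "\<And>c. U_entry (2^m+s) c \<longleftrightarrow> (c = 2^m+s \<or> c = s \<or> c = 2^m)"
    using entry_iff[of m "2^m+s"] by simp
  then have "{c \<in> S. U_entry (2^m + s) c} = S \<inter> {2^m + s, s, 2^m}" by auto
  then show ?thesis unfolding col_sum_def by simp
qed

lemma row_in:
  fixes m s :: nat
  assumes "1 \<le> s" "s < 2^m"
  shows "2^m + s \<in> U_rows (Suc m)"
proof -
  have "\<not> (\<exists>t. 2^m + s = (2::nat)^t)"
  proof
    assume "\<exists>t. 2^m + s = (2::nat)^t"
    then obtain t where t: "2^m + s = (2::nat)^t" by blast
    have "(2::nat)^m < 2^t" using t assms by linarith
    then have "m < t" using power_strict_increasing_iff[of "2::nat" m t] by simp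
    have "(2::nat)^t < 2^Suc m" using t assms by simp
    then have "t < Suc m" using power_strict_increasing_iff[of "2::nat" t "Suc m"] by simp
    with \<open>m < t\<close> show False by simp
  qed
  then show ?thesis unfolding U_rows_def using assms by auto
qed

lemma main_bound:
  "\<And>S. S \<subseteq> {1..2^k - 1} \<Longrightarrow> S \<noteq> {} \<Longrightarrow> (\<forall>r\<in>U_rows k. col_sum U_entry S r \<noteq> 1)
   \<Longrightarrow> 2^(k-1) \<le> card S"
proof (induction k)
  case 0
  then show ?case by auto
next
  case (Suc m)
  fix S :: "nat set"
  assume Ssub: "S \<subseteq> {1..2^Suc m - 1}" and Sne: "S \<noteq> {}"
    and Sfree: "\<forall>r\<in>U_rows (Suc m). col_sum U_entry S r \<noteq> 1"
  define p :: nat where "p = 2^m"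
  have p1: "1 \<le> p" unfolding p_def by simp
  have fin: "finite S" using Ssub finite_subset by blast
  have row: "col_sum U_entry S (p + s) = card (S \<inter> {p + s, s, p})" if "1 \<le> s" "s < p" for s
    using row_sum that unfolding p_def by blast
  have rin: "p + s \<in> U_rows (Suc m)" if "1 \<le> s" "s < p" for s
    using row_in that unfolding p_def by blast
  have top: "2^Suc m - 1 = 2*p - 1" unfolding p_def by simp
  show "2^(Suc m - 1) \<le> card S"
  proof (cases "p \<in> S")
    case True
    have cov: "s \<in> S \<or> p + s \<in> S" if "1 \<le> s" "s < p" for s
    proof (rule ccontr)
      assume "\<not> (s \<in> S \<or> p + s \<in> S)"
      then have "S \<inter> {p + s, s, p} = {p}" using True by auto
      then show False using row[OF that] Sfree rin[OF that] by auto
    qed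
    define f where "f s = (if s \<in> S then s else p + s)" for s
    have inj: "inj_on f {1..<p}"
    proof (rule inj_onI)
      fix a b assume a: "a \<in> {1..<p}" and b: "b \<in> {1..<p}" and e: "f a = f b"
      have "a < p" "b < p" using a b by auto
      show "a = b"
      proof (cases "a \<in> S")
        case aS: True
        show ?thesis
        proof (cases "b \<in> S")
          case True then show ?thesis using e aS unfolding f_def by simp
        next
          case False then have "a = p + b" using e aS unfolding f_def by simp
          then show ?thesis using \<open>a < p\<close> by simp
        qed
      next
        case aS: False
        show ?thesis
        proof (cases "b \<in> S")
          case True then have "p + a = b" using e aS unfolding f_def by simp
          then show ?thesis using \<open>b < p\<close> by simp
        next
          case False then show ?thesis using e aS unfolding f_def by simp
        qed
      qed
    qed
    have img: "f ` {1..<p} \<subseteq> S - {p}"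
    proof
      fix y assume "y \<in> f ` {1..<p}"
      then obtain s where s: "1 \<le> s" "s < p" "y = f s" by auto
      show "y \<in> S - {p}" using cov[OF s(1,2)] s unfolding f_def by auto
    qed
    have "card {1..<p} \<le> card (S - {p})"
      using card_inj_on_le[OF inj img] fin by blast
    then have "p - 1 \<le> card S - 1" using True fin by simp
    moreover have "card S \<noteq> 0" using True fin by auto
    moreover have "card S \<ge> 1" using calculation(2) by simp
    ultimately have "p \<le> card S" using p1 by linarith
    then show ?thesis unfolding p_def by simp
  next
    case False
    define L where "L = S \<inter> {1..p-1}"
    have iff: "s \<in> S \<longleftrightarrow> p + s \<in> S" if "1 \<le> s" "s < p" for s
    proof (rule ccontr)
      assume "\<not> (s \<in> S \<longleftrightarrow> p + s \<in> S)"
      then have "card (S \<inter> {p + s, s, p}) = 1" using False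
        by (cases "s \<in> S") auto
      then show False using row[OF that] Sfree rin[OF that] by auto
    qed
    have Lsub: "L \<subseteq> {1..2^m - 1}" unfolding L_def p_def by auto
    have Lne: "L \<noteq> {}"
    proof -
      obtain c where c: "c \<in> S" using Sne by blast
      show ?thesis
      proof (cases "c < p")
        case True
        have "1 \<le> c" using c Ssub by auto
        then have "c \<in> L" using c True unfolding L_def by auto
        then show ?thesis by blast
      next
        case nc: False
        then have "c \<noteq> p" using c False by auto
        with nc have "p < c" by simp
        moreover have "c \<le> 2*p - 1" using c Ssub top by auto
        ultimately have "1 \<le> c - p" "c - p < p" by auto
        moreover have "p + (c - p) \<in> S" using c \<open>p < c\<close> by simp
        ultimately have "c - p \<in> S" using iff by blast
        then show ?thesis using \<open>1 \<le> c - p\<close> \<open>c - p < p\<close> unfolding L_def by auto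
      qed
    qed
    have Lfree: "\<forall>r\<in>U_rows m. col_sum U_entry L r \<noteq> 1"
    proof
      fix r assume r: "r \<in> U_rows m"
      then have rl: "r < p" unfolding U_rows_def p_def by auto
      have "r \<in> U_rows (Suc m)" using r unfolding U_rows_def by auto
      then have "col_sum U_entry S r \<noteq> 1" using Sfree by blast
      moreover have "{c \<in> S. U_entry r c} = {c \<in> L. U_entry r c}"
      proof -
        have lt: "c < p" if "U_entry r c" for c using entry_le[OF that] rl by simp
        have "c \<in> S \<Longrightarrow> 1 \<le> c" for c using Ssub by auto
        moreover have "c \<le> p - 1" if "U_entry r c" for c using lt[OF that] by simp
        ultimately show ?thesis unfolding L_def by auto
      qed
      ultimately show "col_sum U_entry L r \<noteq> 1" unfolding col_sum_def by simp
    qed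
    have IH: "2^(m-1) \<le> card L" using Suc.IH[OF Lsub Lne Lfree] .
    have finL: "finite L" unfolding L_def using fin by simp
    have disj: "L \<inter> (\<lambda>x. p + x) ` L = {}" unfolding L_def by auto
    have "L \<union> (\<lambda>x. p + x) ` L \<subseteq> S"
    proof
      fix y assume "y \<in> L \<union> (\<lambda>x. p + x) ` L"
      then show "y \<in> S"
      proof
        assume "y \<in> L" then show ?thesis unfolding L_def by blast
      next
        assume "y \<in> (\<lambda>x. p + x) ` L"
        then obtain s where s: "s \<in> L" "y = p + s" by blast
        then have "1 \<le> s" "s < p" "s \<in> S" using p1 unfolding L_def by auto
        then show ?thesis using iff[of s] s(2) by blast
      qed
    qed
    then have "card (L \<union> (\<lambda>x. p + x) ` L) \<le> card S" using fin card_mono by blast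
    moreover have "card (L \<union> (\<lambda>x. p + x) ` L) = card L + card L"
      using card_Un_disjoint[OF finL _ disj] finL card_image[of "\<lambda>x. p + x" L] by (simp add: inj_on_def)
    ultimately have "2 * card L \<le> card S" by simp
    moreover have "(2::nat)^m \<le> 2 * 2^(m-1)" by (cases m) auto
    ultimately show ?thesis using IH by simp
  qed
qed

lemma witness:
  assumes "k \<ge> 1"
  shows "even_set (U_rows k) (U_cols k) U_entry {2^(k-1)..2^k - 1}
       \<and> card {(2::nat)^(k-1)..2^k - 1} = (2::nat)^(k-1)"
proof -
  obtain m where k: "k = Suc m" using assms by (cases k) auto
  define p :: nat where "p = 2^m"
  have top: "(2::nat)^k - 1 = 2*p - 1" unfolding p_def k by simp
  have kk: "k - 1 = m" using k by simp
  have ev: "even (col_sum U_entry {p..2*p-1} r)" if r: "r \<in> U_rows k" for r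
  proof -
    obtain t where t: "2^t < r" "r < 2^(t+1)"
    proof -
      have r1: "1 \<le> r" using r unfolding U_rows_def by auto
      define t where "t = (LEAST t. r < (2::nat)^(t+1))"
      have ex: "r < 2^(r+1)"
      proof -
        have a: "r < 2^r" by simp
        have b: "(2::nat)^r < 2^(r+1)" by simp
        from a b show ?thesis by linarith
      qed
      have lt: "r < 2^(t+1)" unfolding t_def by (rule LeastI[of _ r]) (rule ex)
      have "2^t \<le> r"
      proof (cases t)
        case 0 then show ?thesis using r1 by simp
      next
        case (Suc t') then have "\<not> r < 2^(t'+1)" using not_less_Least[of t' "\<lambda>t. r < (2::nat)^(t+1)"] t_def by auto
        then show ?thesis using Suc by simp
      qed
      moreover have "r \<noteq> 2^t" using r unfolding U_rows_def by auto
      ultimately have "2^t < r" by simp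
      then show ?thesis using that lt by simp
    qed
    have rle: "r \<le> 2*p - 1" using r top unfolding U_rows_def by auto
    show ?thesis
    proof (cases "t < m")
      case True
      then have "(2::nat)^(t+1) \<le> p" unfolding p_def by (intro power_increasing) auto
      then have E: "{c \<in> {p..2*p-1}. U_entry r c} = {}" using entry_le t by fastforce
      show ?thesis unfolding col_sum_def E by simp
    next
      case False
      have "t \<le> m"
      proof (rule ccontr)
        assume "\<not> t \<le> m"
        then have "(2::nat)^(m+1) \<le> 2^t" by (intro power_increasing) auto
        then show False using t rle unfolding p_def by simp
      qed
      then have tm: "t = m" using False by simp
      define s where "s = r - p"
      have s: "1 \<le> s" "s < p" "r = p + s" using t tm unfolding s_def p_def by auto
      have "col_sum U_entry {p..2*p-1} r = card ({p..2*p-1} \<inter> {p + s, s, p})"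
        using row_sum[of s m] s unfolding p_def by simp
      also have "{p..2*p-1} \<inter> {p + s, s, p} = {p + s, p}" using s by auto
      also have "card {p + s, p} = 2" using s by simp
      finally show ?thesis by simp
    qed
  qed
  have "{p..2*p-1} \<subseteq> U_cols k" unfolding U_cols_def top using p_def by auto
  moreover have "{p..2*p-1} \<noteq> {}" unfolding p_def by simp
  moreover have "card {p..2*p-1} = p" unfolding p_def by simp
  ultimately show ?thesis using ev unfolding even_set_def top kk p_def[symmetric] by auto
qed

theorem mainTheorem5:
  fixes k :: nat
  assumes "k \<ge> 2"
  shows "u_mat (U_rows k) (U_cols k) U_entry = 2^(k-1)
       \<and> eps_mat (U_rows k) (U_cols k) U_entry = 2^(k-1)"
proof -
  have W: "even_set (U_rows k) (U_cols k) U_entry {2^(k-1)..2^k - 1}"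
     "card {(2::nat)^(k-1)..2^k - 1} = (2::nat)^(k-1)" using witness assms by auto
  have lb: "2^(k-1) \<le> card S" if "one_free_set (U_rows k) (U_cols k) U_entry S" for S
    using main_bound[of S k] that unfolding one_free_set_def U_cols_def by blast
  have ev1: "one_free_set (U_rows k) (U_cols k) U_entry S" if "even_set (U_rows k) (U_cols k) U_entry S" for S
    using that unfolding even_set_def one_free_set_def by (metis odd_one)
  have "u_mat (U_rows k) (U_cols k) U_entry = 2^(k-1)"
    unfolding u_mat_def
    by (rule Least_equality) (use W ev1 lb in blast)+
  moreover have "eps_mat (U_rows k) (U_cols k) U_entry = 2^(k-1)"
    unfolding eps_mat_def
    by (rule Least_equality) (use W ev1 lb in blast)+
  ultimately show ?thesis by simp
qed

end
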